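(* For all sufficiently large $R$ the following holds. Let $V\subset\mathcal D_R$ be finite, $G_V$ the graph on $V$ in which distinct points are adjacent iff their hyperbolic distance is at most $R$, and let $N(T)$ and $D_{i,j}$ be computed from $V$. For every admissible $(i,j)$, the subgraph of $G_V$ induced by the points of $V$ lying in tiles below $T_{i,j}$ (including $T_{i,j}$) can be covered by at most $D_{i,j}+1$ vertex-disjoint cycles and isolated vertices. Moreover, if $i>0$ and $D_{i,j}=0$, then this subgraph can be covered by exactly one cycle, and this cycle has at least one edge with both endpoints in $T_{i,j}$.
   Context: $\mathcal D_R$ is the hyperbolic disk (curvature $-1$) of radius $R$ around the origin, with polar coordinates $(r,\theta)$, $r\in[0,R)$, $\theta\in(0,2\pi]$. Tiling: $i_{\max}=\lceil 0.9R/(2\ln 2)\rceil$, $n_i=2^{4-i+\lfloor R/(2\ln 2)\rfloor}$ for integers $0\le i\le i_{\max}$; $(i,j)$ is admissible if $0\le i\le i_{\max}$, $0\le j<n_i$; $T_{i,j}=\{(r,\theta)\in\mathcal D_R:\ R-2(i+1)\ln 2\le r<R-2i\ln 2,\ 2\pi j/n_i<\theta\le 2\pi(j+1)/n_i\}$. A tile $T_{i',j'}$ is below $T_{i,j}$ if $i'\le i$ and $T_{i',j'}$ is contained in the sector $\{(r,\theta): 2\pi j/n_i<\theta\le 2\pi(j+1)/n_i\}$. For a point set $V$, $N(T_{i,j})=|V\cap T_{i,j}|$. Demands: $D_{0,j}=N(T_{0,j})$ if $N(T_{0,j})\in\{1,2\}$ and $D_{0,j}=0$ otherwise; for $0<i\le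 i_{\max}$, $D_{i,j}=\max\{D_{i-1,2j}+D_{i-1,2j+1}+3-N(T_{i,j}),0\}$. A graph $H$ is covered by $k$ vertex-disjoint cycles and isolated vertices if its vertex set can be partitioned into $k$ parts, each either a single vertex or the vertex set of a cycle (of length at least $3$) in $H$. *)

theory Defs
  imports Complex_Main "HOL-Library.Disjoint_Sets"
begin

(* Points of the hyperbolic plane in polar coordinates (r, theta). *)
type_synonym hpoint = "real \<times> real"

definition disk :: "real \<Rightarrow> hpoint set" where
  "disk R = {(r, \<theta>). 0 \<le> r \<and> r < R \<and> 0 < \<theta> \<and> \<theta> \<le> 2 * pi}"

(* hyperbolic distance (curvature -1) via the hyperbolic law of cosines *)
definition hdist :: "hpoint \<Rightarrow> hpoint \<Rightarrow> real" where
  "hdist p q = arcosh (cosh (fst p) * cosh (fst q)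
                       - sinh (fst p) * sinh (fst q) * cos (snd p - snd q))"

definition imax :: "real \<Rightarrow> nat" where
  "imax R = nat \<lceil>0.9 * R / (2 * ln 2)\<rceil>"

definition ntiles :: "real \<Rightarrow> nat \<Rightarrow> real" where
  "ntiles R i = (2::real) powi (4 - int i + \<lfloor>R / (2 * ln 2)\<rfloor>)"

definition admissible :: "real \<Rightarrow> nat \<Rightarrow> nat \<Rightarrow> bool" where
  "admissible R i j \<longleftrightarrow> i \<le> imax R \<and> real j < ntiles R i"

definition sector :: "real \<Rightarrow> nat \<Rightarrow> nat \<Rightarrow> hpoint set" where
  "sector R i j = {(r, \<theta>). 2 * pi * j / ntiles R i < \<theta> \<and> \<theta> \<le> 2 * pi * (j + 1) / ntiles R i}"

definition tile :: "real \<Rightarrow> nat \<Rightarrow> nat \<Rightarrow> hpoint set" where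
  "tile R i j = {(r, \<theta>) \<in> disk R. R - 2 * (i + 1) * ln 2 \<le> r \<and> r < R - 2 * i * ln 2}
                \<inter> sector R i j"

definition below :: "real \<Rightarrow> nat \<Rightarrow> nat \<Rightarrow> nat \<Rightarrow> nat \<Rightarrow> bool" where
  "below R i' j' i j \<longleftrightarrow> i' \<le> i \<and> tile R i' j' \<subseteq> sector R i j"

definition below_points :: "real \<Rightarrow> hpoint set \<Rightarrow> nat \<Rightarrow> nat \<Rightarrow> hpoint set" where
  "below_points R V i j =
     V \<inter> (\<Union>{tile R i' j' | i' j'. admissible R i' j' \<and> below R i' j' i j})"

definition Ncount :: "real \<Rightarrow> hpoint set \<Rightarrow> nat \<Rightarrow> nat \<Rightarrow> int" where
  "Ncount R V i j = int (card (V \<inter> tile R i j))"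

fun demand :: "real \<Rightarrow> hpoint set \<Rightarrow> nat \<Rightarrow> nat \<Rightarrow> int" where
  "demand R V 0 j = (if Ncount R V 0 j \<in> {1, 2} then Ncount R V 0 j else 0)"
| "demand R V (Suc i) j =
     max (demand R V i (2 * j) + demand R V i (2 * j + 1) + 3 - Ncount R V (Suc i) j) 0"

definition adjG :: "real \<Rightarrow> hpoint \<Rightarrow> hpoint \<Rightarrow> bool" where
  "adjG R p q \<longleftrightarrow> p \<noteq> q \<and> hdist p q \<le> R"

definition is_cycle :: "('a \<Rightarrow> 'a \<Rightarrow> bool) \<Rightarrow> 'a set \<Rightarrow> 'a list \<Rightarrow> bool" where
  "is_cycle adj S xs \<longleftrightarrow> distinct xs \<and> length xs \<ge> 3 \<and> set xs \<subseteq> S \<and>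
     (\<forall>k < length xs. adj (xs ! k) (xs ! ((k + 1) mod length xs)))"

definition covered_by :: "('a \<Rightarrow> 'a \<Rightarrow> bool) \<Rightarrow> 'a set \<Rightarrow> nat \<Rightarrow> bool" where
  "covered_by adj S k \<longleftrightarrow> (\<exists>P. partition_on S P \<and> finite P \<and> card P = k \<and>
     (\<forall>C \<in> P. (\<exists>v. C = {v}) \<or> (\<exists>xs. is_cycle adj S xs \<and> set xs = C)))"

end

theory Submission
  imports Defs
begin

fun mrg :: "'a list \<Rightarrow> 'a list list \<Rightarrow> 'a list" where
  "mrg (t#ts) (p#ps) = t # p @ mrg ts ps"
| "mrg ts [] = ts"
| "mrg [] ps = concat ps"

lemma mrg_set: "set (mrg ts ps) = set ts \<union> set (concat ps)"
  by (induction ts ps rule: mrg.induct) auto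

lemma mrg_distinct: "distinct (ts @ concat ps) \<Longrightarrow> distinct (mrg ts ps)"
  by (induction ts ps rule: mrg.induct) (auto simp: mrg_set)

lemma mrg_length: "length (mrg ts ps) = length ts + length (concat ps)"
  by (induction ts ps rule: mrg.induct) auto

lemma mrg_hd: "ts \<noteq> [] \<Longrightarrow> hd (mrg ts ps) = hd ts"
  by (cases ts; cases ps) auto

lemma mrg_last: "length ps < length ts \<Longrightarrow> last (mrg ts ps) \<in> set ts"
proof (induction ts ps rule: mrg.induct)
  case (1 t ts p ps)
  then have "ts \<noteq> []" by auto
  then have "mrg ts ps \<noteq> []" using mrg_length[of ts ps] by auto
  then show ?case using 1 by simp
next
  case (2 ts)
  then show ?case by simp
next
  case (3 ps)
  then show ?case by simp
qed

definition hub :: "('a \<Rightarrow> 'a \<Rightarrow> bool) \<Rightarrow> 'a set \<Rightarrow> 'a set \<Rightarrow> bool" where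
  "hub adj T U \<longleftrightarrow> (\<forall>t\<in>T. \<forall>x\<in>U. x \<noteq> t \<longrightarrow> adj t x \<and> adj x t)"

lemma mrg_succ:
  assumes "hub adj T U" "set ts \<subseteq> T" "set ts \<union> set (concat ps) \<subseteq> U"
    "distinct (ts @ concat ps)" "\<forall>p\<in>set ps. p \<noteq> [] \<and> successively adj p"
    "length ps \<le> length ts" "successively adj ts"
  shows "successively adj (mrg ts ps)"
  using assms
proof (induction ts ps rule: mrg.induct)
  case (1 t ts p ps)
  have pne: "p \<noteq> []" using 1(6) by auto
  have hp: "hd p \<in> set p" using pne by simp
  have tT: "t \<in> T" using 1(3) by simp
  have hU: "hd p \<in> U" using 1(4) hp by auto
  have "hd p \<noteq> t" using 1(5) hp by auto
  then have tp: "adj t (hd p)" using 1(2) tT hU unfolding hub_def by blast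
  have rest: "successively adj (mrg ts ps)"
  proof (rule 1(1))
    show "hub adj T U" by fact
    show "set ts \<subseteq> T" using 1(3) by simp
    show "set ts \<union> set (concat ps) \<subseteq> U" using 1(4) by auto
    show "distinct (ts @ concat ps)" using 1(5) by (auto simp: distinct_append)
    show "\<forall>p\<in>set ps. p \<noteq> [] \<and> successively adj p" using 1(6) by simp
    show "length ps \<le> length ts" using 1(7) by simp
    show "successively adj ts" using 1(8) by (auto simp add: successively_Cons)
  qed
  have lp: "ts = [] \<or> adj (last p) (hd ts)"
  proof (cases ts)
    case (Cons a l)
    have "last p \<in> set p" using 1(6) by auto
    moreover have "a \<notin> set p" using 1(5) Cons by auto
    moreover have "a \<in> T" using 1(3) Cons by simp
    moreover have "last p \<in> U" using 1(4) \<open>last p \<in> set p\<close> by auto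
    ultimately show ?thesis using 1(2) Cons unfolding hub_def by force
  qed simp
  show ?case
    using tp rest lp 1(6) 1(7) mrg_hd[of ts ps]
    by (cases ts) (auto simp: successively_Cons successively_append_iff)
next
  case (2 ts)
  then show ?case by simp
next
  case (3 ps)
  then show ?case by simp
qed

definition lcover :: "('a \<Rightarrow> 'a \<Rightarrow> bool) \<Rightarrow> 'a set \<Rightarrow> 'a list list \<Rightarrow> bool" where
  "lcover adj S Ls \<longleftrightarrow>
    (\<forall>xs\<in>set Ls. xs \<noteq> [] \<and> successively adj xs \<and>
        (length xs = 1 \<or> (3 \<le> length xs \<and> adj (last xs) (hd xs)))) \<and>
    distinct (concat Ls) \<and> set (concat Ls) = S"

lemma length_concat_ge: "\<forall>p\<in>set ps. p \<noteq> [] \<Longrightarrow> length ps \<le> length (concat ps)"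
proof (induction ps)
  case (Cons a ps)
  then have "1 \<le> length a" by (simp add: Suc_le_eq)
  then show ?case using Cons by simp
qed simp

lemma last_ne_hd: "distinct xs \<Longrightarrow> 2 \<le> length xs \<Longrightarrow> last xs \<noteq> hd xs"
  by (cases xs rule: remdups_adj.cases) auto

lemma concat_singles: "concat (map (\<lambda>t. [t]) ts) = ts"
  by (induction ts) auto

lemma merge_step:
  assumes lc: "lcover adj S L" and fin: "finite T" and dis: "T \<inter> S = {}"
    and hb: "hub adj T (T \<union> S)"
  shows "\<exists>Ls. lcover adj (T \<union> S) Ls \<and>
     length Ls \<le> (if 3 \<le> card T \<or> (card T = 2 \<and> 1 \<le> length L)
                  then 1 + length L - min (card T) (length L) else card T + length L) \<and>
     (card T \<ge> length L + 1 \<and> card T \<ge> 3 \<longrightarrow>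
        (\<exists>xs. Ls = [xs] \<and> hd xs \<in> T \<and> last xs \<in> T \<and> 3 \<le> length xs))"
proof -
  obtain ts where ts: "set ts = T" "distinct ts" using finite_distinct_list[OF fin] by blast
  have cardT: "card T = length ts" using ts distinct_card by metis
  define K where "K = length L"
  have Lprops: "\<forall>xs\<in>set L. xs \<noteq> [] \<and> successively adj xs \<and>
        (length xs = 1 \<or> (3 \<le> length xs \<and> adj (last xs) (hd xs)))"
    "distinct (concat L)" "set (concat L) = S" using lc unfolding lcover_def by auto
  have dall: "distinct (ts @ concat L)" using ts Lprops dis by auto
  show ?thesis
  proof (cases "3 \<le> card T \<or> (card T = 2 \<and> 1 \<le> length L)")
    case True
    define m where "m = min (card T) K"
    define xs where "xs = mrg ts (take m L)"
    define Ls where "Ls = xs # drop m L"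
    have cL: "concat L = concat (take m L) @ concat (drop m L)"
      by (metis append_take_drop_id concat_append)
    have d3: "distinct (ts @ concat (take m L) @ concat (drop m L))" using dall cL by simp
    have dxs: "distinct xs" unfolding xs_def
      by (rule mrg_distinct) (use d3 in \<open>auto simp add: distinct_append\<close>)
    have sxs: "set xs = T \<union> set (concat (take m L))" unfolding xs_def by (simp add: mrg_set ts)
    have sub1: "set (concat (take m L)) \<subseteq> S"
      using Lprops(3) set_take_subset by fastforce
    have tne: "ts \<noteq> []" using True cardT by auto
    have ltake: "length (take m L) = m" unfolding m_def K_def by simp
    have succ: "successively adj xs" unfolding xs_def
    proof (rule mrg_succ[OF hb])
      show "set ts \<subseteq> T" using ts by simp
      show "set ts \<union> set (concat (take m L)) \<subseteq> T \<union> S" using ts sub1 by auto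
      show "distinct (ts @ concat (take m L))" using d3 by (auto simp add: distinct_append)
      show "\<forall>p\<in>set (take m L). p \<noteq> [] \<and> successively adj p"
        using Lprops(1) by (meson in_set_takeD)
      show "length (take m L) \<le> length ts" using ltake cardT m_def by simp
      show "successively adj ts"
        using hb ts unfolding successively_conv_nth hub_def
        by (metis Suc_lessD UnI1 distinct_conv_nth n_not_Suc_n nth_mem)
    qed
    have len3: "3 \<le> length xs"
    proof -
      have "length xs = length ts + length (concat (take m L))"
        unfolding xs_def by (simp add: mrg_length)
      moreover have "\<forall>p\<in>set (take m L). p \<noteq> []" using Lprops(1) by (auto dest: in_set_takeD)
      then have "m \<le> length (concat (take m L))"
        using length_concat_ge[of "take m L"] ltake by simp
      moreover have "1 \<le> m \<or> 3 \<le> length ts" using True cardT unfolding m_def K_def by auto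
      ultimately show ?thesis using True cardT by auto
    qed
    have hdxs: "hd xs \<in> T" unfolding xs_def using mrg_hd[OF tne] tne ts by auto
    have wrap: "adj (last xs) (hd xs)"
    proof -
      have "last xs \<noteq> hd xs" using last_ne_hd[OF dxs] len3 by simp
      have "xs \<noteq> []" using len3 by auto
      then have lin: "last xs \<in> set xs" by simp
      have "last xs \<in> T \<union> S" using sxs sub1 lin by blast
      then show ?thesis using \<open>last xs \<noteq> hd xs\<close> hdxs hb unfolding hub_def by blast
    qed
    have lcv: "lcover adj (T \<union> S) Ls"
      unfolding lcover_def Ls_def
    proof (intro conjI)
      show "\<forall>xs\<in>set (xs # drop m L). xs \<noteq> [] \<and> successively adj xs \<and>
        (length xs = 1 \<or> 3 \<le> length xs \<and> adj (last xs) (hd xs))"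
        using Lprops(1) succ len3 wrap by (auto dest: in_set_dropD)
      show "distinct (concat (xs # drop m L))"
        using d3 dxs sxs ts by (auto simp: distinct_append)
      show "set (concat (xs # drop m L)) = T \<union> S"
        using sxs Lprops(3) cL by auto
    qed
    have lenLs: "length Ls = 1 + length L - min (card T) (length L)"
      unfolding Ls_def m_def K_def by simp
    have single: "card T \<ge> length L + 1 \<and> card T \<ge> 3 \<longrightarrow>
        (\<exists>xs. Ls = [xs] \<and> hd xs \<in> T \<and> last xs \<in> T \<and> 3 \<le> length xs)"
    proof
      assume a: "card T \<ge> length L + 1 \<and> card T \<ge> 3"
      then have mK: "m = length L" unfolding m_def K_def by simp
      have "last xs \<in> T" unfolding xs_def using mrg_last[of "take m L" ts] ltake a cardT ts mK
        by simp
      then show "\<exists>xs. Ls = [xs] \<and> hd xs \<in> T \<and> last xs \<in> T \<and> 3 \<le> length xs"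
        using mK hdxs len3 unfolding Ls_def by auto
    qed
    show ?thesis by (rule exI[of _ Ls]) (use lcv lenLs single True in simp)
  next
    case False
    define Ls where "Ls = map (\<lambda>t. [t]) ts @ L"
    have "lcover adj (T \<union> S) Ls"
      unfolding lcover_def Ls_def using Lprops dall ts by (auto simp: concat_singles)
    moreover have "length Ls = card T + length L" unfolding Ls_def cardT by simp
    ultimately show ?thesis using False by (intro exI[of _ Ls]) auto
  qed
qed

lemma lcover_append:
  assumes "lcover adj S1 L1" "lcover adj S2 L2" "S1 \<inter> S2 = {}"
  shows "lcover adj (S1 \<union> S2) (L1 @ L2)"
  using assms unfolding lcover_def by auto

lemma lcover_empty: "lcover adj {} []"
  unfolding lcover_def by simp

lemma to_is_cycle:
  assumes "distinct xs" "3 \<le> length xs" "set xs \<subseteq> S" "successively adj xs" "adj (last xs) (hd xs)"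
  shows "is_cycle adj S xs"
  unfolding is_cycle_def
proof (intro conjI allI impI)
  fix k assume k: "k < length xs"
  show "adj (xs ! k) (xs ! ((k + 1) mod length xs))"
  proof (cases "Suc k < length xs")
    case True
    then show ?thesis using assms(4) successively_nth by fastforce
  next
    case False
    then have "k = length xs - 1" using k by simp
    moreover have "xs \<noteq> []" using assms(2) by auto
    ultimately show ?thesis using assms(5) k
      by (simp add: last_conv_nth hd_conv_nth)
  qed
qed (use assms in auto)

lemma lcover_covered:
  assumes "lcover adj S Ls"
  shows "covered_by adj S (length Ls)"
proof -
  have A: "\<forall>xs\<in>set Ls. xs \<noteq> [] \<and> successively adj xs \<and>
        (length xs = 1 \<or> (3 \<le> length xs \<and> adj (last xs) (hd xs)))"
    and B: "distinct (concat Ls)" and C: "set (concat Ls) = S"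
    using assms unfolding lcover_def by auto
  from B have B1: "distinct (removeAll [] Ls)"
    and B2: "\<forall>ys. ys \<in> set Ls \<longrightarrow> distinct ys"
    and B3: "\<forall>ys zs. ys \<in> set Ls \<and> zs \<in> set Ls \<and> ys \<noteq> zs \<longrightarrow> set ys \<inter> set zs = {}"
    unfolding distinct_concat_iff by auto
  have "[] \<notin> set Ls" using A by auto
  then have "removeAll [] Ls = Ls" by (simp add: removeAll_id)
  with B1 have dL: "distinct Ls" by simp
  define P where "P = set ` set Ls"
  have inj: "inj_on set (set Ls)"
  proof (rule inj_onI)
    fix x y assume "x \<in> set Ls" "y \<in> set Ls" "set x = set y"
    then show "x = y" using A B3 by (metis inf.idem set_empty)
  qed
  have "card P = length Ls" unfolding P_def using card_image[OF inj] distinct_card[OF dL] by simp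
  moreover have "partition_on S P"
    unfolding partition_on_def P_def
  proof (intro conjI)
    show "\<Union> (set ` set Ls) = S" using C by auto
    show "disjoint (set ` set Ls)"
    proof (rule disjointI)
      fix a b assume "a \<in> set ` set Ls" "b \<in> set ` set Ls" "a \<noteq> b"
      then obtain ys zs where "ys \<in> set Ls" "zs \<in> set Ls" "a = set ys" "b = set zs" "ys \<noteq> zs"
        by blast
      then show "a \<inter> b = {}" using B3 by blast
    qed
    show "{} \<notin> set ` set Ls" using A by auto
  qed
  moreover have "\<forall>Cc \<in> P. (\<exists>v. Cc = {v}) \<or> (\<exists>xs. is_cycle adj S xs \<and> set xs = Cc)"
  proof
    fix Cc assume "Cc \<in> P"
    then obtain xs where xs: "xs \<in> set Ls" "Cc = set xs" unfolding P_def by auto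
    have sub: "set xs \<subseteq> S" using xs C by auto
    show "(\<exists>v. Cc = {v}) \<or> (\<exists>xs. is_cycle adj S xs \<and> set xs = Cc)"
    proof (cases "length xs = 1")
      case True
      then obtain v where "xs = [v]" by (metis One_nat_def length_0_conv length_Suc_conv)
      then show ?thesis using xs by auto
    next
      case False
      then have "3 \<le> length xs \<and> adj (last xs) (hd xs)" using A xs by auto
      then have "is_cycle adj S xs" using to_is_cycle[of xs S adj] A B2 xs sub by auto
      then show ?thesis using xs by auto
    qed
  qed
  moreover have "finite P" unfolding P_def by simp
  ultimately show ?thesis unfolding covered_by_def by (intro exI[of _ P]) simp
qed


lemma sinh_le_exp_half: "sinh (x::real) \<le> exp x / 2"
  unfolding sinh_def by (simp add: divide_simps)

lemma cosh_ge_exp_half: "exp (x::real) / 2 \<le> cosh x"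
  unfolding cosh_def by (simp add: divide_simps)

lemma cosh_le_exp_abs: "cosh (x::real) \<le> exp \<bar>x\<bar>"
proof -
  have "exp x \<le> exp \<bar>x\<bar>" "exp (-x) \<le> exp \<bar>x\<bar>" by auto
  then have "exp x + exp (-x) \<le> exp \<bar>x\<bar> * 2" by linarith
  then show ?thesis unfolding cosh_def by (simp add: divide_simps)
qed

lemma one_minus_cos_le: "1 - cos (d::real) \<le> d^2 / 2"
proof -
  have "cos d = 1 - 2 * sin (d/2) ^ 2" using cos_double_sin[of "d/2"] by simp
  moreover have "sin (d/2) ^ 2 \<le> (d/2)^2"
    using abs_sin_x_le_abs_x[of "d/2"] by (metis abs_ge_zero power2_abs power_mono)
  ultimately show ?thesis by (simp add: power_divide)
qed

lemma hdist_sym: "hdist p q = hdist q p"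
proof -
  have "cos (snd p - snd q) = cos (snd q - snd p)" by (metis cos_minus minus_diff_eq)
  then show ?thesis unfolding hdist_def by (simp add: mult.commute mult.left_commute)
qed

lemma arg_form: "cosh (r::real) * cosh (s::real) - sinh r * sinh s * cos (d::real)
   = cosh (r - s) + sinh r * sinh s * (1 - cos d)"
  using cosh_diff[of r s] by (simp add: algebra_simps)

lemma exp_four_pow: "exp (real i * (2 * ln 2)) = 4 ^ i"
proof -
  have "exp (2 * ln (2::real)) = 4"
    by (simp add: exp_of_nat_mult[of 2, simplified] power2_eq_square)
  then show ?thesis by (simp add: exp_of_nat_mult)
qed

lemma hdist_bound:
  fixes r s \<theta> \<phi> n R :: real and i :: nat
  assumes R: "R \<ge> 1000" and r0: "0 \<le> r" and s0: "0 \<le> s"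
    and rup: "r + 2 * i * ln 2 \<le> R" and sup: "s \<le> R"
    and rlo: "R - 2 * (i + 1) * ln 2 \<le> r" and slo: "R - 2 * (i + 1) * ln 2 \<le> s"
    and ib: "real i \<le> 0.9 * R / (2 * ln 2) + 1"
    and dth: "\<bar>\<theta> - \<phi>\<bar> \<le> 2 * pi / n" and npos: "n > 0"
    and nb: "n * 2 ^ i \<ge> 8 * exp (R / 2)"
  shows "hdist (r, \<theta>) (s, \<phi>) \<le> R"
proof -
  define d where "d = \<theta> - \<phi>"
  define A where "A = cosh r * cosh s - sinh r * sinh s * cos d"
  have A2: "A = cosh (r - s) + sinh r * sinh s * (1 - cos d)"
    unfolding A_def by (rule arg_form)
  have sr: "0 \<le> sinh r" "0 \<le> sinh s" using r0 s0 by auto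
  have c1: "0 \<le> 1 - cos d" by simp
  have ln2: "0 < ln (2::real)" "ln (2::real) < 1" by (simp_all add: ln_2_less_1)
  have t1: "sinh r * sinh s \<le> exp r * exp s / 4"
  proof -
    have "sinh r * sinh s \<le> (exp r / 2) * (exp s / 2)"
      by (rule mult_mono) (use sinh_le_exp_half sr in auto)
    then show ?thesis by simp
  qed
  have d2: "d^2 \<le> (2 * pi / n)^2"
    using dth unfolding d_def by (metis abs_ge_zero power2_abs power_mono)
  have e4: "exp r * 4 ^ i \<le> exp R"
  proof -
    have "exp r * 4 ^ i = exp (r + real i * (2 * ln 2))"
      by (simp add: exp_add exp_four_pow)
    also have "\<dots> \<le> exp R" using rup by (simp add: algebra_simps)
    finally show ?thesis .
  qed
  have n2: "(n * 2 ^ i)^2 \<ge> 64 * exp R"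
  proof -
    have "(8 * exp (R/2))^2 \<le> (n * 2 ^ i)^2"
      by (rule power_mono[OF nb]) simp
    moreover have "(8 * exp (R/2))^2 = 64 * exp R"
      by (simp add: power_mult_distrib power2_eq_square exp_add[symmetric])
    ultimately show ?thesis by simp
  qed
  have pi2: "pi^2 \<le> 16"
  proof -
    have "pi^2 \<le> (4::real)^2" by (rule power_mono) (use pi_less_4 pi_ge_zero in auto)
    then show ?thesis by simp
  qed
  have term2: "sinh r * sinh s * (1 - cos d) \<le> exp R / 8"
  proof -
    have "sinh r * sinh s * (1 - cos d) \<le> (exp r * exp s / 4) * (d^2 / 2)"
      by (rule mult_mono[OF t1 one_minus_cos_le]) (use sr in auto)
    also have "\<dots> \<le> (exp r * exp R / 4) * ((2 * pi / n)^2 / 2)"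
      by (rule mult_mono) (use sup d2 in auto)
    also have "\<dots> = (exp r * 4 ^ i) * exp R * pi^2 / (2 * (n * 2 ^ i)^2)"
    proof -
      have p1: "((2::real)^i)^2 = 2^(i*2)" by (simp only: power_mult)
      have p2: "(2::real)^(i*2) = (2^2)^i" by (simp only: mult.commute[of i 2] power_mult)
      have hh: "(n * 2 ^ i)^2 = n^2 * 4^i"
        using p1 p2 by (simp add: power_mult_distrib)
      have h4: "((2::real)^i)^2 = 4^i" using p1 p2 by simp
      show ?thesis using npos by (simp add: hh h4 power_divide field_simps power_mult_distrib)
    qed
    also have "\<dots> \<le> exp R * exp R * 16 / (2 * (64 * exp R))"
    proof (rule frac_le)
      show "0 \<le> exp R * exp R * 16" by simp
      show "exp r * 4 ^ i * exp R * pi\<^sup>2 \<le> exp R * exp R * 16"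
        by (intro mult_mono e4 pi2) auto
      show "0 < 2 * (64 * exp R)" by simp
      show "2 * (64 * exp R) \<le> 2 * (n * 2 ^ i)\<^sup>2" using n2 by simp
    qed
    also have "\<dots> = exp R / 8" by (simp add: field_simps)
    finally show ?thesis .
  qed
  have rs: "\<bar>r - s\<bar> \<le> 0.9 * R + 4"
  proof -
    define x where "x = real i * ln 2"
    have x0: "0 \<le> x" using ln2 unfolding x_def by simp
    have h1: "r \<le> R - 2 * x" using rup unfolding x_def by (simp add: algebra_simps)
    have h2: "R - 2 * x - 2 * ln 2 \<le> r" "R - 2 * x - 2 * ln 2 \<le> s"
      using rlo slo unfolding x_def by (simp_all add: algebra_simps)
    have h3: "2 * (real i + 1) * ln 2 = 2 * x + 2 * ln 2" unfolding x_def by (simp add: algebra_simps)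
    have "\<bar>r - s\<bar> \<le> 2 * x + 2 * ln 2"
      unfolding abs_le_iff using x0 h1 h2 sup ln2 by simp
    then have "\<bar>r - s\<bar> \<le> 2 * (i + 1) * ln 2" using h3 by (simp add: add.commute)
    also have "\<dots> \<le> 2 * (0.9 * R / (2 * ln 2) + 2) * ln 2"
      using ib ln2 by (intro mult_right_mono) auto
    also have "\<dots> = 0.9 * R + 4 * ln 2" using ln2 by (simp add: field_simps)
    also have "\<dots> \<le> 0.9 * R + 4" using ln2 by simp
    finally show ?thesis .
  qed
  have term1: "cosh (r - s) \<le> exp (0.9 * R + 4)"
    using cosh_le_exp_abs[of "r - s"] rs by (meson exp_le_cancel_iff order_trans)
  have big: "exp (0.9 * R + 4) * exp 2 \<le> exp R"
    using R by (simp add: exp_add[symmetric])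
  have e2: "3 \<le> exp (2::real)" using exp_ge_add_one_self[of 2] by simp
  have "A \<le> cosh R"
  proof -
    have "exp (0.9 * R + 4) * 3 \<le> exp R"
      using big e2 by (meson exp_gt_zero less_eq_real_def mult_left_mono order_trans)
    then have "A \<le> exp R / 3 + exp R / 8" using A2 term1 term2 by simp
    also have "\<dots> \<le> exp R / 2" by simp
    also have "\<dots> \<le> cosh R" by (rule cosh_ge_exp_half)
    finally show ?thesis .
  qed
  moreover have "1 \<le> A"
  proof -
    have "0 \<le> sinh r * sinh s * (1 - cos d)" using sr c1 by (intro mult_nonneg_nonneg) auto
    then show ?thesis using A2 cosh_real_ge_1[of "r - s"] by linarith
  qed
  ultimately have "arcosh A \<le> arcosh (cosh R)"
    using arcosh_less_iff_real[of "cosh R" A] cosh_real_ge_1[of R] by (meson leD leI)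
  also have "arcosh (cosh R) = R" using R by (simp add: arcosh_cosh_real)
  finally show ?thesis unfolding hdist_def A_def d_def by simp
qed


lemma ntiles_pos: "0 < ntiles R i"
  unfolding ntiles_def by simp

lemma ntiles_Suc: "ntiles R i = 2 * ntiles R (Suc i)"
proof -
  have e: "4 - int i + \<lfloor>R / (2 * ln 2)\<rfloor> = (4 - int (Suc i) + \<lfloor>R / (2 * ln 2)\<rfloor>) + 1" by simp
  show ?thesis unfolding ntiles_def by (subst e, subst power_int_add_1') auto
qed

lemma ntiles_shift: "ntiles R i = 2 ^ d * ntiles R (i + d)"
proof (induction d)
  case (Suc d)
  then show ?case using ntiles_Suc[of R "i + d"] by simp
qed simp

lemma imax_bound: "R \<ge> 0 \<Longrightarrow> real (imax R) \<le> 0.9 * R / (2 * ln 2) + 1"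
proof -
  assume R: "R \<ge> 0"
  define y where "y = 0.9 * R / (2 * ln 2)"
  have y0: "0 \<le> y" using R unfolding y_def by simp
  have c0: "0 \<le> \<lceil>y\<rceil>" using y0 by simp
  have "real (nat \<lceil>y\<rceil>) = real_of_int \<lceil>y\<rceil>" using c0 by simp
  also have "\<dots> \<le> y + 1" using ceiling_correct[of y] by linarith
  finally show ?thesis unfolding imax_def y_def by simp
qed

lemma exponent_nonneg:
  assumes R: "R \<ge> 0" and i: "i \<le> imax R"
  shows "0 \<le> 4 - int i + \<lfloor>R / (2 * ln 2)\<rfloor>"
proof -
  define z where "z = R / (2 * ln 2)"
  have z0: "0 \<le> z" using R unfolding z_def by simp
  have "real i \<le> 0.9 * R / (2 * ln 2) + 1" using imax_bound[OF R] i by linarith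
  then have iz: "real i \<le> 0.9 * z + 1" unfolding z_def by simp
  have "z < real_of_int \<lfloor>z\<rfloor> + 1" using floor_correct[of z] by simp
  moreover have "real_of_int (4 - int i + \<lfloor>z\<rfloor>) = 4 - real i + real_of_int \<lfloor>z\<rfloor>" by simp
  ultimately have "real_of_int (4 - int i + \<lfloor>z\<rfloor>) > 0" using iz z0 by linarith
  then show ?thesis unfolding z_def by linarith
qed

lemma ntiles_nat:
  assumes "R \<ge> 0" "i \<le> imax R"
  shows "ntiles R i = real (2 ^ nat (4 - int i + \<lfloor>R / (2 * ln 2)\<rfloor>))"
proof -
  have e: "4 - int i + \<lfloor>R / (2 * ln 2)\<rfloor> = int (nat (4 - int i + \<lfloor>R / (2 * ln 2)\<rfloor>))"
    using exponent_nonneg[OF assms] by simp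
  show ?thesis unfolding ntiles_def by (subst e, subst power_int_of_nat) simp
qed

lemma exp_3ln2: "exp (3 * ln 2) = (8::real)"
proof -
  have "exp (real 3 * ln 2) = (exp (ln 2)) ^ 3" by (rule exp_of_nat_mult)
  then show ?thesis by simp
qed

lemma ntiles_lower:
  assumes R: "R \<ge> 0"
  shows "ntiles R i * 2 ^ i \<ge> 8 * exp (R / 2)"
proof -
  define z where "z = R / (2 * ln 2)"
  have "ntiles R 0 = 2 ^ i * ntiles R i" using ntiles_shift[of R 0 i] by simp
  moreover have "ntiles R 0 = 2 powr real_of_int (4 + \<lfloor>z\<rfloor>)"
    unfolding ntiles_def z_def by (subst powr_real_of_int') auto
  moreover have "2 powr (3 + z) \<le> 2 powr real_of_int (4 + \<lfloor>z\<rfloor>)"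
  proof (rule powr_mono)
    have "z < real_of_int \<lfloor>z\<rfloor> + 1" using floor_correct[of z] by simp
    then show "3 + z \<le> real_of_int (4 + \<lfloor>z\<rfloor>)" by linarith
  qed simp
  moreover have "2 powr (3 + z) = 8 * exp (R / 2)"
  proof -
    have "2 powr (3 + z) = exp ((3 + z) * ln 2)" by (simp add: powr_def)
    also have "(3 + z) * ln 2 = 3 * ln 2 + R / 2" unfolding z_def by (simp add: field_simps)
    also have "exp (3 * ln 2 + R / 2) = 8 * exp (R / 2)" by (simp add: exp_add exp_3ln2)
    finally show ?thesis .
  qed
  ultimately show ?thesis by (simp add: mult.commute)
qed

lemma mem_sector: "p \<in> sector R i j \<longleftrightarrow>
   2 * pi * real j / ntiles R i < snd p \<and> snd p \<le> 2 * pi * (real j + 1) / ntiles R i"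
  by (cases p) (simp add: sector_def add.commute)

lemma sector_split:
  "sector R (Suc i) j = sector R i (2 * j) \<union> sector R i (2 * j + 1)"
proof -
  define n where "n = ntiles R (Suc i)"
  have n0: "0 < n" unfolding n_def by (rule ntiles_pos)
  have ni: "ntiles R i = 2 * n" unfolding n_def by (rule ntiles_Suc)
  have e1: "2 * pi * real (2 * j) / (2 * n) = 2 * pi * real j / n" using n0 by (simp add: field_simps)
  have e2: "2 * pi * (real (2 * j) + 1) / (2 * n) = 2 * pi * (real (2 * j + 1)) / (2 * n)" by simp
  have e3: "2 * pi * (real (2 * j + 1) + 1) / (2 * n) = 2 * pi * (real j + 1) / n"
    using n0 by (simp add: field_simps)
  have splitI: "\<And>x L c U. (L::real) \<le> c \<Longrightarrow> c \<le> U \<Longrightarrow>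
      ((L < x \<and> x \<le> U) \<longleftrightarrow> (L < x \<and> x \<le> c \<or> c < x \<and> x \<le> U))" by auto
  have c1: "2 * pi * real j / n \<le> 2 * pi * real (2 * j + 1) / (2 * n)"
    using n0 by (simp add: divide_simps)
  have c2: "2 * pi * real (2 * j + 1) / (2 * n) \<le> 2 * pi * (real j + 1) / n"
    using n0 by (simp add: divide_simps)
  show ?thesis
  proof (rule set_eqI)
    fix p
    show "p \<in> sector R (Suc i) j \<longleftrightarrow> p \<in> sector R i (2 * j) \<union> sector R i (2 * j + 1)"
      unfolding Un_iff mem_sector ni n_def[symmetric] e1 e2 e3
      by (rule splitI[OF c1 c2])
  qed
qed

lemma sector_disj: "sector R i (2 * j) \<inter> sector R i (2 * j + 1) = {}"
proof -
  have "\<And>p. p \<in> sector R i (2 * j) \<Longrightarrow> p \<in> sector R i (2 * j + 1) \<Longrightarrow> False"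
    unfolding mem_sector by (simp add: add.commute)
  then show ?thesis by blast
qed

lemma nest_aux:
  fixes a N th ph :: real and e j m :: nat
  assumes a: "a > 0" and N: "N > 0" and e: "e > 0"
    and h1: "a * j / (e * N) < th" and h2: "th \<le> a * (j + 1) / (e * N)"
    and h3: "a * m / N < th" and h4: "th \<le> a * (m + 1) / N"
    and h5: "a * j / (e * N) < ph" and h6: "ph \<le> a * (j + 1) / (e * N)"
  shows "a * m / N < ph \<and> ph \<le> a * (m + 1) / N"
proof -
  have eN: "0 < real e * N" using e N by simp
  have g1: "a * j < th * (e * N)" using h1 eN by (simp add: pos_divide_less_eq)
  have g2: "th * (e * N) \<le> a * (j + 1)" using h2 eN by (simp add: pos_le_divide_eq)
  have g3: "a * m < th * N" using h3 N by (simp add: pos_divide_less_eq)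
  have g4: "th * N \<le> a * (m + 1)" using h4 N by (simp add: pos_le_divide_eq)
  have g5: "a * j < ph * (e * N)" using h5 eN by (simp add: pos_divide_less_eq)
  have g6: "ph * (e * N) \<le> a * (j + 1)" using h6 eN by (simp add: pos_le_divide_eq)
  have "th * (e * N) \<le> a * (m + 1) * e" using g4 e by (simp add: mult_right_mono mult.commute mult.left_commute)
  moreover have "a * real ((m + 1) * e) = a * (m + 1) * e" by (simp add: algebra_simps)
  ultimately have "a * real j < a * real ((m + 1) * e)" using g1 by linarith
  then have "real j < real ((m + 1) * e)" using a by simp
  then have k1: "j + 1 \<le> (m + 1) * e" by linarith
  have "a * m * e < th * N * e" using g3 e by simp
  then have "a * (m * e) < a * (j + 1)" using g2 by (simp add: mult.commute mult.left_commute)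
  then have "real (m * e) < real (j + 1)" using a by simp
  then have k2: "m * e \<le> j" by linarith
  have "a * (m * e) \<le> a * j" using k2 a by (metis mult_left_mono of_nat_le_iff of_nat_mult less_eq_real_def)
  then have "a * m * e < ph * N * e" using g5 by (simp add: mult.commute mult.left_commute)
  then have r1: "a * m < ph * N" using e by simp
  have "a * (j + 1) \<le> a * ((m + 1) * e)" using k1 a
    by (metis mult_left_mono of_nat_le_iff less_eq_real_def of_nat_add of_nat_1)
  then have "ph * N * e \<le> a * (m + 1) * e" using g6 by (simp add: algebra_simps)
  then have r2: "ph * N \<le> a * (m + 1)" using e by simp
  show ?thesis using r1 r2 N by (simp add: pos_divide_less_eq pos_le_divide_eq)
qed

lemma sector_nest:
  assumes "i' \<le> i''" "p \<in> sector R i' j'" "p \<in> sector R i'' m"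
  shows "sector R i' j' \<subseteq> sector R i'' m"
proof
  fix q assume q: "q \<in> sector R i' j'"
  define N where "N = ntiles R i''"
  define e :: nat where "e = 2 ^ (i'' - i')"
  have N0: "0 < N" unfolding N_def by (rule ntiles_pos)
  have e0: "0 < e" unfolding e_def by simp
  have nt: "ntiles R i' = real e * N"
    unfolding N_def e_def using ntiles_shift[of R i' "i'' - i'"] assms(1) by simp
  have P1: "2 * pi * real j' / (real e * N) < snd p \<and> snd p \<le> 2 * pi * (real j' + 1) / (real e * N)"
    using assms(2) unfolding mem_sector nt .
  have P2: "2 * pi * real m / N < snd p \<and> snd p \<le> 2 * pi * (real m + 1) / N"
    using assms(3) unfolding mem_sector N_def .
  have Q: "2 * pi * real j' / (real e * N) < snd q \<and> snd q \<le> 2 * pi * (real j' + 1) / (real e * N)"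
    using q unfolding mem_sector nt .
  have "2 * pi * real m / N < snd q \<and> snd q \<le> 2 * pi * (real m + 1) / N"
    using nest_aux[of "2 * pi" N e j' "snd p" m "snd q"] P1 P2 Q N0 e0 by (simp add: add.commute)
  then show "q \<in> sector R i'' m" unfolding mem_sector N_def .
qed

lemma mem_tile: "p \<in> tile R i j \<longleftrightarrow> p \<in> disk R \<and> R - 2 * (i + 1) * ln 2 \<le> fst p \<and>
    fst p < R - 2 * i * ln 2 \<and> p \<in> sector R i j"
  by (cases p) (simp add: tile_def add.commute)

lemma mem_disk: "p \<in> disk R \<longleftrightarrow> 0 \<le> fst p \<and> fst p < R \<and> 0 < snd p \<and> snd p \<le> 2 * pi"
  by (cases p) (simp add: disk_def)

lemma below_props:
  assumes "p \<in> below_points R V i j"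
  shows "p \<in> V \<and> p \<in> sector R i j \<and> R - 2 * (i + 1) * ln 2 \<le> fst p \<and> p \<in> disk R"
proof -
  obtain i' j' where h: "p \<in> V" "admissible R i' j'" "below R i' j' i j" "p \<in> tile R i' j'"
    using assms unfolding below_points_def by blast
  have ii: "i' \<le> i" "tile R i' j' \<subseteq> sector R i j" using h(3) unfolding below_def by auto
  have "p \<in> sector R i j" using ii h(4) by blast
  moreover have "R - 2 * (i' + 1) * ln 2 \<le> fst p" "p \<in> disk R" using h(4) unfolding mem_tile by auto
  moreover have "R - 2 * (i + 1) * ln 2 \<le> R - 2 * (i' + 1) * ln 2"
    using ii(1) by (simp add: mult_right_mono)
  ultimately show ?thesis using h(1) by linarith
qed

lemma tile_below: "admissible R i j \<Longrightarrow> V \<inter> tile R i j \<subseteq> below_points R V i j"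
  unfolding below_points_def below_def using mem_tile by blast

lemma tile_same_level: "p \<in> tile R i j' \<Longrightarrow> p \<in> sector R i j \<Longrightarrow> p \<in> tile R i j"
  unfolding mem_tile by auto

lemma below_0: "admissible R 0 j \<Longrightarrow> below_points R V 0 j = V \<inter> tile R 0 j"
proof
  assume a: "admissible R 0 j"
  show "V \<inter> tile R 0 j \<subseteq> below_points R V 0 j" by (rule tile_below[OF a])
  show "below_points R V 0 j \<subseteq> V \<inter> tile R 0 j"
  proof
    fix p assume "p \<in> below_points R V 0 j"
    then obtain i' j' where h: "p \<in> V" "admissible R i' j'" "below R i' j' 0 j" "p \<in> tile R i' j'"
      unfolding below_points_def by blast
    then have "i' = 0" "p \<in> sector R 0 j" unfolding below_def by auto
    then show "p \<in> V \<inter> tile R 0 j" using h tile_same_level by blast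
  qed
qed

lemma below_Suc:
  assumes a: "admissible R (Suc i) j"
  shows "below_points R V (Suc i) j =
     (V \<inter> tile R (Suc i) j) \<union> below_points R V i (2 * j) \<union> below_points R V i (2 * j + 1)"
proof
  show "below_points R V (Suc i) j \<subseteq>
     (V \<inter> tile R (Suc i) j) \<union> below_points R V i (2 * j) \<union> below_points R V i (2 * j + 1)"
  proof
    fix p assume "p \<in> below_points R V (Suc i) j"
    then obtain i' j' where h: "p \<in> V" "admissible R i' j'" "below R i' j' (Suc i) j" "p \<in> tile R i' j'"
      unfolding below_points_def by blast
    have ii: "i' \<le> Suc i" "tile R i' j' \<subseteq> sector R (Suc i) j" using h(3) unfolding below_def by auto
    have ps: "p \<in> sector R (Suc i) j" using ii h(4) by blast
    have pj: "p \<in> sector R i' j'" using h(4) unfolding mem_tile by simp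
    show "p \<in> (V \<inter> tile R (Suc i) j) \<union> below_points R V i (2 * j) \<union> below_points R V i (2 * j + 1)"
    proof (cases "i' = Suc i")
      case True
      then show ?thesis using h(1,4) ps tile_same_level by blast
    next
      case False
      then have il: "i' \<le> i" using ii(1) by simp
      from ps have "p \<in> sector R i (2 * j) \<or> p \<in> sector R i (2 * j + 1)"
        unfolding sector_split by blast
      then show ?thesis
      proof
        assume "p \<in> sector R i (2 * j)"
        then have "sector R i' j' \<subseteq> sector R i (2 * j)" using sector_nest[OF il pj] by blast
        then have "tile R i' j' \<subseteq> sector R i (2 * j)" unfolding tile_def by blast
        then have "p \<in> below_points R V i (2 * j)"
          unfolding below_points_def below_def using h(1,2,4) il by blast
        then show ?thesis by blast
      next
        assume "p \<in> sector R i (2 * j + 1)"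
        then have "sector R i' j' \<subseteq> sector R i (2 * j + 1)" using sector_nest[OF il pj] by blast
        then have "tile R i' j' \<subseteq> sector R i (2 * j + 1)" unfolding tile_def by blast
        then have "p \<in> below_points R V i (2 * j + 1)"
          unfolding below_points_def below_def using h(1,2,4) il by blast
        then show ?thesis by blast
      qed
    qed
  qed
  have "V \<inter> tile R (Suc i) j \<subseteq> below_points R V (Suc i) j" by (rule tile_below[OF a])
  moreover have "below_points R V i k \<subseteq> below_points R V (Suc i) j" if k: "k = 2 * j \<or> k = 2 * j + 1" for k
  proof -
    have sk: "sector R i k \<subseteq> sector R (Suc i) j" using k sector_split by blast
    show ?thesis
    proof
      fix p assume "p \<in> below_points R V i k"
      then obtain i' j' where h: "p \<in> V" "admissible R i' j'" "i' \<le> i" "tile R i' j' \<subseteq> sector R i k"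
         "p \<in> tile R i' j'"
        unfolding below_points_def below_def by blast
      have "i' \<le> Suc i" "tile R i' j' \<subseteq> sector R (Suc i) j" using h(3,4) sk by auto
      then show "p \<in> below_points R V (Suc i) j"
        unfolding below_points_def below_def using h(1,2,5) by blast
    qed
  qed
  ultimately show "(V \<inter> tile R (Suc i) j) \<union> below_points R V i (2 * j) \<union> below_points R V i (2 * j + 1)
      \<subseteq> below_points R V (Suc i) j" by blast
qed

lemma adm_children:
  assumes R: "R \<ge> 0" and a: "admissible R (Suc i) j"
  shows "admissible R i (2 * j) \<and> admissible R i (2 * j + 1)"
proof -
  have i1: "Suc i \<le> imax R" and jl: "real j < ntiles R (Suc i)" using a unfolding admissible_def by auto
  obtain k :: nat where k: "ntiles R (Suc i) = real k" using ntiles_nat[OF R i1] by blast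
  have "j < k" using jl k by simp
  then have "real (2 * j + 1) < real (2 * k)" by simp
  moreover have "ntiles R i = real (2 * k)" using ntiles_Suc[of R i] k by simp
  ultimately show ?thesis using i1 unfolding admissible_def by auto
qed


lemma hub_lemma:
  assumes R: "R \<ge> 1000" and V: "V \<subseteq> disk R" and a: "admissible R i j"
  shows "hub (adjG R) (V \<inter> tile R i j) (below_points R V i j)"
  unfolding hub_def
proof (intro ballI impI)
  fix t x assume t: "t \<in> V \<inter> tile R i j" and x: "x \<in> below_points R V i j" and ne: "x \<noteq> t"
  have tt: "t \<in> disk R" "R - 2 * (i + 1) * ln 2 \<le> fst t" "fst t < R - 2 * i * ln 2" "t \<in> sector R i j"
    using t mem_tile[of t R i j] by auto
  have xx: "x \<in> sector R i j" "R - 2 * (i + 1) * ln 2 \<le> fst x" "x \<in> disk R"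
    using below_props[OF x] by auto
  define n where "n = ntiles R i"
  have n0: "0 < n" unfolding n_def by (rule ntiles_pos)
  have st: "2 * pi * real j / n < snd t \<and> snd t \<le> 2 * pi * (real j + 1) / n"
    using tt(4) unfolding mem_sector n_def .
  have sx: "2 * pi * real j / n < snd x \<and> snd x \<le> 2 * pi * (real j + 1) / n"
    using xx(1) unfolding mem_sector n_def .
  have w: "2 * pi * (real j + 1) / n = 2 * pi * real j / n + 2 * pi / n"
    by (simp add: distrib_left add_divide_distrib)
  have dth: "\<bar>snd t - snd x\<bar> \<le> 2 * pi / n" using st sx w by (simp add: abs_le_iff)
  have ib: "real i \<le> 0.9 * R / (2 * ln 2) + 1"
  proof -
    have "i \<le> imax R" using a unfolding admissible_def by simp
    then have "real i \<le> real (imax R)" by simp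
    then show ?thesis using imax_bound[of R] R by linarith
  qed
  have hb: "hdist (fst t, snd t) (fst x, snd x) \<le> R"
  proof (rule hdist_bound[OF R])
    show "0 \<le> fst t" using tt(1) unfolding mem_disk by simp
    show "0 \<le> fst x" using xx(3) unfolding mem_disk by simp
    show "fst t + 2 * i * ln 2 \<le> R" using tt(3) by simp
    show "fst x \<le> R" using xx(3) unfolding mem_disk by simp
    show "R - 2 * (i + 1) * ln 2 \<le> fst t" by fact
    show "R - 2 * (i + 1) * ln 2 \<le> fst x" by fact
    show "real i \<le> 0.9 * R / (2 * ln 2) + 1" by fact
    show "\<bar>snd t - snd x\<bar> \<le> 2 * pi / n" by fact
    show "0 < n" by fact
    show "8 * exp (R / 2) \<le> n * 2 ^ i" unfolding n_def using ntiles_lower[of R i] R by simp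
  qed
  then have "hdist t x \<le> R" by simp
  moreover have "hdist x t \<le> R" using \<open>hdist t x \<le> R\<close> hdist_sym[of x t] by simp
  ultimately show "adjG R t x \<and> adjG R x t" using ne unfolding adjG_def by auto
qed

lemma disj_tile_below:
  assumes "k = 2 * j \<or> k = 2 * j + 1"
  shows "(V \<inter> tile R (Suc i) j) \<inter> below_points R V i k = {}"
proof -
  have "False" if "p \<in> tile R (Suc i) j" "p \<in> below_points R V i k" for p
  proof -
    have "fst p < R - 2 * real (Suc i) * ln 2" using that(1) mem_tile[of p R "Suc i" j] by simp
    then have a: "fst p < R - 2 * (real i + 1) * ln 2" by (simp add: algebra_simps)
    have "R - 2 * real (i + 1) * ln 2 \<le> fst p" using below_props[OF that(2)] by simp
    then have b: "R - 2 * (real i + 1) * ln 2 \<le> fst p" by (simp add: algebra_simps)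
    show False using a b by linarith
  qed
  then show ?thesis by blast
qed

lemma disj_below: "below_points R V i (2 * j) \<inter> below_points R V i (2 * j + 1) = {}"
  using below_props[of _ R V i "2 * j"] below_props[of _ R V i "2 * j + 1"] sector_disj[of R i j]
  by blast

lemma demand_nonneg: "0 \<le> demand R V i j"
  by (cases i) auto

lemma arith1:
  fixes K N lenLs :: nat and d1 d2 :: int
  assumes "int K \<le> d1 + d2 + 2" "0 \<le> d1" "0 \<le> d2"
    "lenLs \<le> (if 3 \<le> N \<or> (N = 2 \<and> 1 \<le> K) then 1 + K - min N K else N + K)"
  shows "int lenLs \<le> max (d1 + d2 + 3 - int N) 0 + 1"
proof (cases "3 \<le> N \<or> (N = 2 \<and> 1 \<le> K)")
  case True
  then have l: "lenLs \<le> 1 + K - min N K" using assms(4) by simp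
  show ?thesis
  proof (cases "N \<le> K")
    case True
    then have "lenLs \<le> 1 + K - N" using l by simp
    then have "int lenLs \<le> 1 + int K - int N" using True by linarith
    then show ?thesis using assms(1) by linarith
  next
    case False
    then have "lenLs \<le> 1" using l by simp
    then show ?thesis by linarith
  qed
next
  case False
  then have l: "lenLs \<le> N + K" using assms(4) by (simp split: if_splits)
  from False have "N \<le> 1 \<or> (N = 2 \<and> K = 0)" by auto
  then show ?thesis using l assms(1-3) by auto
qed

lemma main_ind:
  assumes R: "R \<ge> 1000" and fin: "finite V" and V: "V \<subseteq> disk R"
  shows "admissible R i j \<Longrightarrow> \<exists>L. lcover (adjG R) (below_points R V i j) L \<and>
      int (length L) \<le> demand R V i j + 1 \<and>
      (0 < i \<and> demand R V i j = 0 \<longrightarrow>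
         (\<exists>xs. L = [xs] \<and> hd xs \<in> tile R i j \<and> last xs \<in> tile R i j \<and> 3 \<le> length xs))"
proof (induction i arbitrary: j)
  case 0
  define T where "T = V \<inter> tile R 0 j"
  have bT: "below_points R V 0 j = T" unfolding T_def by (rule below_0[OF 0])
  have finT: "finite T" unfolding T_def using fin by simp
  have hb: "hub (adjG R) T (T \<union> {})" using hub_lemma[OF R V 0] bT T_def by simp
  obtain Ls where Ls: "lcover (adjG R) (T \<union> {}) Ls"
    "length Ls \<le> (if 3 \<le> card T \<or> (card T = 2 \<and> 1 \<le> length ([]::(real \<times> real) list list))
                  then 1 + length ([]::(real \<times> real) list list) - min (card T) (length ([]::(real \<times> real) list list))
                  else card T + length ([]::(real \<times> real) list list))"
    using merge_step[OF lcover_empty finT _ hb] by auto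
  have d: "demand R V 0 j = (if int (card T) \<in> {1, 2} then int (card T) else 0)"
    unfolding T_def by (simp add: Ncount_def)
  have "int (length Ls) \<le> demand R V 0 j + 1"
    using Ls(2) unfolding d by (auto split: if_splits)
  then show ?case using Ls(1) bT by auto
next
  case (Suc i)
  have a1: "admissible R i (2 * j)" and a2: "admissible R i (2 * j + 1)"
    using adm_children[of R i j] Suc.prems R by auto
  obtain L1 where L1: "lcover (adjG R) (below_points R V i (2 * j)) L1"
    "int (length L1) \<le> demand R V i (2 * j) + 1" using Suc.IH[OF a1] by blast
  obtain L2 where L2: "lcover (adjG R) (below_points R V i (2 * j + 1)) L2"
    "int (length L2) \<le> demand R V i (2 * j + 1) + 1" using Suc.IH[OF a2] by blast
  define T where "T = V \<inter> tile R (Suc i) j"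
  define S where "S = below_points R V i (2 * j) \<union> below_points R V i (2 * j + 1)"
  have bS: "below_points R V (Suc i) j = T \<union> S"
    unfolding T_def S_def using below_Suc[OF Suc.prems] by auto
  have lcS: "lcover (adjG R) S (L1 @ L2)"
    unfolding S_def by (rule lcover_append[OF L1(1) L2(1) disj_below])
  have finT: "finite T" unfolding T_def using fin by simp
  have dTS: "T \<inter> S = {}" unfolding T_def S_def
    using disj_tile_below[of "2 * j" j V R i] disj_tile_below[of "2 * j + 1" j V R i] by auto
  have hb: "hub (adjG R) T (T \<union> S)" using hub_lemma[OF R V Suc.prems] bS T_def by simp
  obtain Ls where Ls: "lcover (adjG R) (T \<union> S) Ls"
    "length Ls \<le> (if 3 \<le> card T \<or> (card T = 2 \<and> 1 \<le> length (L1 @ L2))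
                  then 1 + length (L1 @ L2) - min (card T) (length (L1 @ L2)) else card T + length (L1 @ L2))"
    "card T \<ge> length (L1 @ L2) + 1 \<and> card T \<ge> 3 \<longrightarrow>
        (\<exists>xs. Ls = [xs] \<and> hd xs \<in> T \<and> last xs \<in> T \<and> 3 \<le> length xs)"
    using merge_step[OF lcS finT dTS hb] by blast
  define d1 where "d1 = demand R V i (2 * j)"
  define d2 where "d2 = demand R V i (2 * j + 1)"
  have dS: "demand R V (Suc i) j = max (d1 + d2 + 3 - int (card T)) 0"
    unfolding d1_def d2_def T_def by (simp add: Ncount_def)
  have K: "int (length (L1 @ L2)) \<le> d1 + d2 + 2" using L1(2) L2(2) unfolding d1_def d2_def by simp
  have nn: "0 \<le> d1" "0 \<le> d2" unfolding d1_def d2_def by (simp_all add: demand_nonneg)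
  have bound: "int (length Ls) \<le> demand R V (Suc i) j + 1"
    unfolding dS by (rule arith1[OF K nn Ls(2)])
  have single: "0 < Suc i \<and> demand R V (Suc i) j = 0 \<longrightarrow>
         (\<exists>xs. Ls = [xs] \<and> hd xs \<in> tile R (Suc i) j \<and> last xs \<in> tile R (Suc i) j \<and> 3 \<le> length xs)"
  proof
    assume "0 < Suc i \<and> demand R V (Suc i) j = 0"
    then have "d1 + d2 + 3 - int (card T) \<le> 0" unfolding dS by simp
    then have "card T \<ge> length (L1 @ L2) + 1 \<and> card T \<ge> 3" using K nn by linarith
    then show "\<exists>xs. Ls = [xs] \<and> hd xs \<in> tile R (Suc i) j \<and> last xs \<in> tile R (Suc i) j \<and> 3 \<le> length xs"
      using Ls(3) unfolding T_def by blast
  qed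
  show ?case using Ls(1) bound single bS by auto
qed

theorem mainTheorem9:
  shows "\<exists>R0. \<forall>R \<ge> R0. \<forall>V. finite V \<and> V \<subseteq> disk R \<longrightarrow>
     (\<forall>i j. admissible R i j \<longrightarrow>
        (\<exists>k. int k \<le> demand R V i j + 1 \<and> covered_by (adjG R) (below_points R V i j) k) \<and>
        (i > 0 \<and> demand R V i j = 0 \<longrightarrow>
           (\<exists>xs. is_cycle (adjG R) (below_points R V i j) xs \<and>
                 set xs = below_points R V i j \<and>
                 (\<exists>k < length xs. xs ! k \<in> tile R i j \<and>
                                  xs ! ((k + 1) mod length xs) \<in> tile R i j))))"
proof (rule exI[of _ "1000::real"], intro allI impI conjI)
  fix R :: real and V i j
  assume R: "1000 \<le> R" and VV: "finite V \<and> V \<subseteq> disk R" and a: "admissible R i j"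
  obtain L where L: "lcover (adjG R) (below_points R V i j) L"
      "int (length L) \<le> demand R V i j + 1"
      "0 < i \<and> demand R V i j = 0 \<longrightarrow>
         (\<exists>xs. L = [xs] \<and> hd xs \<in> tile R i j \<and> last xs \<in> tile R i j \<and> 3 \<le> length xs)"
    using main_ind[OF R _ _ a] VV by blast
  show "\<exists>k. int k \<le> demand R V i j + 1 \<and> covered_by (adjG R) (below_points R V i j) k"
    using L(1,2) lcover_covered by blast
  assume c: "0 < i \<and> demand R V i j = 0"
  then obtain xs where xs: "L = [xs]" "hd xs \<in> tile R i j" "last xs \<in> tile R i j" "3 \<le> length xs"
    using L(3) by blast
  have P: "successively (adjG R) xs" "adjG R (last xs) (hd xs)" "distinct xs"
      "set xs = below_points R V i j"
    using L(1) xs(1,4) unfolding lcover_def by auto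
  have cyc: "is_cycle (adjG R) (below_points R V i j) xs"
    by (rule to_is_cycle) (use P xs(4) in auto)
  define k where "k = length xs - 1"
  have kl: "k < length xs" unfolding k_def using xs(4) by simp
  have "xs \<noteq> []" using xs(4) by auto
  then have h1: "xs ! k = last xs" unfolding k_def using last_conv_nth[of xs] by simp
  have "k + 1 = length xs" unfolding k_def using xs(4) by simp
  then have h2: "xs ! ((k + 1) mod length xs) = hd xs"
    using \<open>xs \<noteq> []\<close> by (simp add: hd_conv_nth)
  show "\<exists>xs. is_cycle (adjG R) (below_points R V i j) xs \<and>
                 set xs = below_points R V i j \<and>
                 (\<exists>k < length xs. xs ! k \<in> tile R i j \<and>
                                  xs ! ((k + 1) mod length xs) \<in> tile R i j)"
    using cyc P(4) kl xs(2,3) h1 h2 by metis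
qed

end
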